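(* For every integer $k>4$, \[\overline{\alpha}(\{1,4,k\})=\begin{cases}\frac{2k}{5k+5} & k\equiv 0\pmod 5,\\ \frac25 & k\equiv 1\pmod 5,\\ \frac{2k+1}{5k+5} & k\equiv 2\pmod 5,\\ \frac{2k-1}{5k+5} & k\equiv 3\pmod 5,\\ \frac25 & k\equiv 4\pmod 5.\end{cases}\]
   Context: For a finite set $S$ of positive integers, the distance graph $G(S)$ has vertex set $\mathbb{Z}$, with $i,j$ adjacent iff $|i-j|\in S$. The density of $A\subseteq\mathbb{Z}$ is $\delta(A)=\limsup_{N\to\infty}\frac{|A\cap[-N,N]|}{2N+1}$, and the independence ratio $\overline{\alpha}(S)$ is the supremum of $\delta(A)$ over independent sets $A$ of $G(S)$. *)

theory Defs
  imports "HOL-Analysis.Analysis" "HOL-Library.Liminf_Limsup"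
begin

definition dist_adj :: "nat set \<Rightarrow> int \<Rightarrow> int \<Rightarrow> bool" where
  "dist_adj S i j \<longleftrightarrow> nat \<bar>i - j\<bar> \<in> S"

definition independent_set :: "nat set \<Rightarrow> int set \<Rightarrow> bool" where
  "independent_set S A \<longleftrightarrow> (\<forall>i\<in>A. \<forall>j\<in>A. \<not> dist_adj S i j)"

definition upper_density :: "int set \<Rightarrow> ereal" where
  "upper_density A =
     limsup (\<lambda>N::nat. ereal (real (card (A \<inter> {-int N..int N})) / real (2 * N + 1)))"

definition indep_ratio :: "nat set \<Rightarrow> ereal" where
  "indep_ratio S = (SUP A \<in> {A. independent_set S A}. upper_density A)"

end

theory Submission
  imports Defs
begin


definition good14 :: "int set \<Rightarrow> bool" where
  "good14 A \<longleftrightarrow> (\<forall>x\<in>A. x+1 \<notin> A \<and> x+4 \<notin> A)"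

definition cA :: "int set \<Rightarrow> int \<Rightarrow> nat" where "cA A x = (if x \<in> A then 1 else 0)"

lemma card_split:
  fixes a b c :: int
  assumes "a \<le> b" "b \<le> c"
  shows "card (A \<inter> {a..<c}) = card (A \<inter> {a..<b}) + card (A \<inter> {b..<c})"
proof -
  have "A \<inter> {a..<c} = (A \<inter> {a..<b}) \<union> (A \<inter> {b..<c})" using assms by auto
  moreover have "(A \<inter> {a..<b}) \<inter> (A \<inter> {b..<c}) = {}" by auto
  ultimately show ?thesis by (simp add: card_Un_disjoint)
qed

lemma card_as_sum: "finite I \<Longrightarrow> card (A \<inter> I) = (\<Sum>x\<in>I. cA A x)"
proof -
  assume "finite I"
  have "A \<inter> I = {x\<in>I. x\<in>A}" by auto
  hence "card (A \<inter> I) = (\<Sum>x\<in>{x\<in>I. x\<in>A}. 1)" by simp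
  also have "\<dots> = (\<Sum>x\<in>I. if x \<in> A then 1 else 0)" using \<open>finite I\<close> by (rule sum.inter_filter)
  finally show ?thesis unfolding cA_def .
qed

lemma cnt5: "card (A \<inter> {a..<a+5}) = cA A a + cA A (a+1) + cA A (a+2) + cA A (a+3) + cA A (a+4)"
proof -
  have e: "{a..<a+5} = {a,a+1,a+2,a+3,a+4}" by auto
  show ?thesis by (subst card_as_sum, simp, subst e, simp)
qed

lemma cnt1: "card (A \<inter> {a..<a+1}) = cA A a"
proof -
  have e: "{a..<a+1} = {a}" by auto
  show ?thesis by (subst card_as_sum, simp, subst e, simp)
qed

lemma cnt2: "card (A \<inter> {a..<a+2}) = cA A a + cA A (a+1)"
proof -
  have e: "{a..<a+2} = {a,a+1}" by auto
  show ?thesis by (subst card_as_sum, simp, subst e, simp)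
qed

lemma cnt3: "card (A \<inter> {a..<a+3}) = cA A a + cA A (a+1) + cA A (a+2)"
proof -
  have e: "{a..<a+3} = {a,a+1,a+2}" by auto
  show ?thesis by (subst card_as_sum, simp, subst e, simp)
qed

lemma cA_le: "cA A x \<le> 1" by (simp add: cA_def)
lemma cA_in: "cA A x = 1 \<longleftrightarrow> x \<in> A" "cA A x = 0 \<longleftrightarrow> x \<notin> A" by (auto simp: cA_def)

lemma g1: "good14 A \<Longrightarrow> cA A x + cA A (x+1) \<le> 1"
  unfolding good14_def cA_def by auto
lemma g4: "good14 A \<Longrightarrow> cA A x + cA A (x+4) \<le> 1"
  unfolding good14_def cA_def by auto

lemma blk5:
  assumes "good14 A"
  shows "card (A \<inter> {a..<a+5}) \<le> 2"
proof -
  have "cA A (a+1) + cA A (a+2) \<le> 1" "cA A (a+2) + cA A (a+3) \<le> 1" "cA A (a+3) + cA A (a+4) \<le> 1"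
    using g1[OF assms, of "a+1"] g1[OF assms, of "a+2"] g1[OF assms, of "a+3"] by (simp_all add: add.assoc)
  then show ?thesis using cnt5[of A a] g1[OF assms, of a] g4[OF assms, of a] by linarith
qed

lemma blk5j: assumes "good14 A" shows "card (A \<inter> {a..<a+5*int j}) \<le> 2*j"
proof (induction j)
  case 0 then show ?case by simp
next
  case (Suc j)
  have "card (A \<inter> {a..<a+5*int (Suc j)}) = card (A \<inter> {a..<a+5*int j}) + card (A \<inter> {a+5*int j..<a+5*int j+5})"
    using card_split[of a "a+5*int j" "a+5*int j+5" A] by (simp add: algebra_simps)
  also have "\<dots> \<le> 2*j + 2" using Suc blk5[OF assms, of "a+5*int j"] by linarith
  finally show ?case by simp
qed

lemma L0: assumes "good14 A"
  shows "card (A \<inter> {a..<a+5*int j+1}) \<le> 2*j+1 \<and>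
         (card (A \<inter> {a..<a+5*int j+1}) = 2*j+1 \<longrightarrow> a \<in> A \<and> a + 5*int j \<in> A)"
proof (induction j)
  case 0
  show ?case using cnt1[of A a] cA_le[of A a] cA_in[of A a] by simp
next
  case (Suc j)
  let ?b = "a + 5*int j + 1"
  have sp: "card (A \<inter> {a..<a+5*int (Suc j)+1}) = card (A \<inter> {a..<?b}) + card (A \<inter> {?b..<?b+5})"
    using card_split[of a "?b" "?b+5" A] by (simp add: algebra_simps)
  have c2: "card (A \<inter> {?b..<?b+5}) \<le> 2" by (rule blk5[OF assms])
  have c2': "card (A \<inter> {?b..<?b+5}) \<le> 1" if "a + 5*int j \<in> A" "?b+4 \<notin> A"
  proof -
    have "cA A ?b = 0" "cA A (?b+3) = 0" "cA A (?b+4) = 0"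
      using that g1[OF assms, of "a+5*int j"] g4[OF assms, of "a+5*int j"] cA_in[of A "a+5*int j"]
        cA_in[of A "?b+4"]
      by (simp_all add: algebra_simps)
    moreover have "cA A (?b+1) + cA A (?b+2) \<le> 1" using g1[OF assms, of "?b+1"] by (simp add: add.assoc)
    ultimately show ?thesis using cnt5[of A ?b] by linarith
  qed
  have e: "a + 5 * int (Suc j) = ?b + 4" by simp
  show ?case
  proof
    show "card (A \<inter> {a..<a+5*int (Suc j)+1}) \<le> 2*Suc j+1" using Suc.IH sp c2 by simp
    show "card (A \<inter> {a..<a+5*int (Suc j)+1}) = 2*Suc j+1 \<longrightarrow> a \<in> A \<and> a + 5*int (Suc j) \<in> A"
    proof
      assume h: "card (A \<inter> {a..<a+5*int (Suc j)+1}) = 2*Suc j+1"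
      then have h1: "card (A \<inter> {a..<?b}) = 2*j+1" "card (A \<inter> {?b..<?b+5}) = 2"
        using Suc.IH sp c2 by auto
      then have "a \<in> A" "a + 5*int j \<in> A" using Suc.IH by auto
      moreover have "?b + 4 \<in> A" using c2' h1 \<open>a + 5*int j \<in> A\<close> by fastforce
      ultimately show "a \<in> A \<and> a + 5*int (Suc j) \<in> A" unfolding e by simp
    qed
  qed
qed



lemma count_bound:
  fixes \<rho> :: real and T :: nat and A :: "int set"
  assumes ch: "\<And>a. a\<in>A \<Longrightarrow> \<exists>L t. L > 0 \<and> real t \<le> \<rho> * real L \<and> t \<le> T \<and> card (A \<inter> {a..<a+int L}) \<le> t"
    and rho: "\<rho> \<ge> 0"
  shows "real (card (A \<inter> {a..<a+int n})) \<le> \<rho> * n + T"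
proof (induction n arbitrary: a rule: less_induct)
  case (less n)
  show ?case
  proof (cases "A \<inter> {a..<a+int n} = {}")
    case True then show ?thesis using rho by simp
  next
    case False
    define a0 where "a0 = Min (A \<inter> {a..<a+int n})"
    have fin: "finite (A \<inter> {a..<a+int n})" by simp
    have a0in: "a0 \<in> A \<inter> {a..<a+int n}" unfolding a0_def using Min_in[OF fin False] .
    have a0min: "\<And>x. x \<in> A \<inter> {a..<a+int n} \<Longrightarrow> a0 \<le> x" unfolding a0_def using fin by simp
    have eq1: "A \<inter> {a..<a+int n} = A \<inter> {a0..<a+int n}" using a0in a0min by auto
    obtain L t where Lt: "L > 0" "real t \<le> \<rho> * real L" "t \<le> T" "card (A \<inter> {a0..<a0+int L}) \<le> t"
      using ch[of a0] a0in by blast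
    show ?thesis
    proof (cases "a0 + int L \<ge> a + int n")
      case True
      have "A \<inter> {a0..<a+int n} \<subseteq> A \<inter> {a0..<a0+int L}" using True by auto
      then have "card (A \<inter> {a0..<a+int n}) \<le> t" using Lt(4) by (meson card_mono finite_Int finite_atLeastLessThan_int order_trans)
      then show ?thesis using eq1 Lt(3) rho by (simp add: order_trans) (smt (verit) of_nat_0_le_iff of_nat_mono mult_nonneg_nonneg)
    next
      case False
      define n' where "n' = nat (a + int n - (a0 + int L))"
      have n'lt: "n' < n" using False a0in Lt(1) unfolding n'_def by auto
      have n'eq: "a0 + int L + int n' = a + int n" using False unfolding n'_def by auto
      have IH: "real (card (A \<inter> {a0+int L..<a0+int L+int n'})) \<le> \<rho> * n' + T" using less[OF n'lt] .
      have "A \<inter> {a0..<a+int n} = (A \<inter> {a0..<a0+int L}) \<union> (A \<inter> {a0+int L..<a0+int L+int n'})"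
        using n'eq False by auto
      then have "card (A \<inter> {a0..<a+int n}) \<le> card (A \<inter> {a0..<a0+int L}) + card (A \<inter> {a0+int L..<a0+int L+int n'})"
        by (metis card_Un_le)
      then have "real (card (A \<inter> {a0..<a+int n})) \<le> t + (\<rho> * n' + T)" using Lt(4) IH by linarith
      also have "\<dots> \<le> \<rho> * L + \<rho> * n' + T" using Lt(2) by simp
      also have "\<dots> \<le> \<rho> * n + T"
      proof -
        have "int L + int n' \<le> int n" using n'eq a0in by auto
        then have "real L + real n' \<le> real n" by linarith
        then show ?thesis using rho by (smt (verit) distrib_left mult_left_mono)
      qed
      finally show ?thesis using eq1 by simp
    qed
  qed
qed



lemma ud_upper:
  fixes \<rho> C :: real
  assumes "\<And>N. real (card (A \<inter> {-int N..int N})) \<le> \<rho> * (2*N+1) + C"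
  shows "upper_density A \<le> ereal \<rho>"
proof -
  have le: "ereal (real (card (A \<inter> {-int N..int N})) / real (2*N+1)) \<le> ereal (\<rho> + C / real (2*N+1))" for N
  proof -
    have pos: "real (2*N+1) > 0" by simp
    have "real (card (A \<inter> {-int N..int N})) / real (2*N+1) \<le> (\<rho> * (2*N+1) + C) / real (2*N+1)"
      using assms[of N] pos by (simp add: divide_right_mono)
    also have "\<dots> = \<rho> + C / real (2*N+1)" using pos by (simp add: field_simps)
    finally show ?thesis by simp
  qed
  have lim: "(\<lambda>N. ereal (\<rho> + C / real (2*N+1))) \<longlonglongrightarrow> ereal \<rho>"
  proof -
    have "(\<lambda>N. C / real (2*N+1)) \<longlonglongrightarrow> 0"
    proof -
      have "filterlim (\<lambda>N::nat. real (2*N+1)) at_top sequentially"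
        by (rule filterlim_at_top_mono[OF filterlim_real_sequentially]) auto
      then show ?thesis by (intro tendsto_divide_0[OF tendsto_const]) (simp add: filterlim_at_top_imp_at_infinity)
    qed
    then have "(\<lambda>N. \<rho> + C / real (2*N+1)) \<longlonglongrightarrow> \<rho> + 0" by (intro tendsto_add) auto
    then show ?thesis by (simp add: tendsto_ereal)
  qed
  have "upper_density A \<le> limsup (\<lambda>N. ereal (\<rho> + C / real (2*N+1)))"
    unfolding upper_density_def by (rule Limsup_mono) (use le in auto)
  also have "\<dots> = ereal \<rho>" by (rule lim_imp_Limsup[OF _ lim]) simp
  finally show ?thesis .
qed

lemma ud_lower:
  fixes \<rho> C :: real
  assumes "\<And>N. real (card (A \<inter> {-int N..int N})) \<ge> \<rho> * (2*N+1) - C"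
  shows "upper_density A \<ge> ereal \<rho>"
proof -
  have le: "ereal (\<rho> - C / real (2*N+1)) \<le> ereal (real (card (A \<inter> {-int N..int N})) / real (2*N+1))" for N
  proof -
    have pos: "real (2*N+1) > 0" by simp
    have "\<rho> - C / real (2*N+1) = (\<rho> * (2*N+1) - C) / real (2*N+1)" using pos by (simp add: field_simps)
    also have "\<dots> \<le> real (card (A \<inter> {-int N..int N})) / real (2*N+1)"
      using assms[of N] pos by (simp add: divide_right_mono)
    finally show ?thesis by simp
  qed
  have lim: "(\<lambda>N. ereal (\<rho> - C / real (2*N+1))) \<longlonglongrightarrow> ereal \<rho>"
  proof -
    have "(\<lambda>N. C / real (2*N+1)) \<longlonglongrightarrow> 0"
    proof -
      have "filterlim (\<lambda>N::nat. real (2*N+1)) at_top sequentially"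
        by (rule filterlim_at_top_mono[OF filterlim_real_sequentially]) auto
      then show ?thesis by (intro tendsto_divide_0[OF tendsto_const]) (simp add: filterlim_at_top_imp_at_infinity)
    qed
    then have "(\<lambda>N. \<rho> - C / real (2*N+1)) \<longlonglongrightarrow> \<rho> - 0" by (intro tendsto_diff) auto
    then show ?thesis by (simp add: tendsto_ereal)
  qed
  have "ereal \<rho> = limsup (\<lambda>N. ereal (\<rho> - C / real (2*N+1)))" by (rule lim_imp_Limsup[OF _ lim, symmetric]) simp
  also have "\<dots> \<le> upper_density A"
    unfolding upper_density_def by (rule Limsup_mono) (use le in auto)
  finally show ?thesis .
qed



lemma per_window:
  fixes p :: int
  assumes p: "p > 0" and B: "B \<subseteq> {0..<p}"
  shows "card ({x. x mod p \<in> B} \<inter> {a..<a+p}) = card B"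
proof -
  have "bij_betw (\<lambda>x. x mod p) ({x. x mod p \<in> B} \<inter> {a..<a+p}) B"
  proof (rule bij_betw_imageI)
    show "inj_on (\<lambda>x. x mod p) ({x. x mod p \<in> B} \<inter> {a..<a+p})"
    proof (rule inj_onI)
      fix x y assume xy: "x \<in> {x. x mod p \<in> B} \<inter> {a..<a+p}" "y \<in> {x. x mod p \<in> B} \<inter> {a..<a+p}" "x mod p = y mod p"
      then have "p dvd (x - y)" by (simp add: mod_eq_dvd_iff)
      then obtain q where q: "x - y = p * q" by (auto simp: dvd_def)
      have "\<bar>x - y\<bar> < p" using xy by auto
      show "x = y"
      proof (rule ccontr)
        assume "x \<noteq> y"
        then have "q \<noteq> 0" using q by auto
        then have "1 \<le> \<bar>q\<bar>" by linarith
        then have "p * 1 \<le> p * \<bar>q\<bar>" using p by (intro mult_left_mono) auto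
        also have "\<dots> = \<bar>x - y\<bar>" using q p by (simp add: abs_mult)
        finally show False using \<open>\<bar>x - y\<bar> < p\<close> by simp
      qed
    qed
    show "(\<lambda>x. x mod p) ` ({x. x mod p \<in> B} \<inter> {a..<a+p}) = B"
    proof
      show "(\<lambda>x. x mod p) ` ({x. x mod p \<in> B} \<inter> {a..<a+p}) \<subseteq> B" by auto
      show "B \<subseteq> (\<lambda>x. x mod p) ` ({x. x mod p \<in> B} \<inter> {a..<a+p})"
      proof
        fix r assume r: "r \<in> B"
        then have r0: "0 \<le> r" "r < p" using B by auto
        define x where "x = a + (r - a) mod p"
        have "x mod p = (a + (r - a)) mod p" unfolding x_def by (rule mod_add_right_eq)
        also have "\<dots> = r" using r0 by simp
        finally have xr: "x mod p = r" .
        moreover have "x \<in> {a..<a+p}" unfolding x_def using p by simp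
        ultimately show "r \<in> (\<lambda>x. x mod p) ` ({x. x mod p \<in> B} \<inter> {a..<a+p})"
          using r xr by (intro image_eqI[where x=x]) auto
      qed
    qed
  qed
  then show ?thesis by (rule bij_betw_same_card)
qed

lemma per_windows:
  fixes p :: int
  assumes p: "p > 0" and B: "B \<subseteq> {0..<p}"
  shows "card ({x. x mod p \<in> B} \<inter> {a..<a+int n*p}) = n * card B"
proof (induction n)
  case 0 then show ?case by simp
next
  case (Suc n)
  have "card ({x. x mod p \<in> B} \<inter> {a..<a+int (Suc n)*p}) =
        card ({x. x mod p \<in> B} \<inter> {a..<a+int n*p}) + card ({x. x mod p \<in> B} \<inter> {a+int n*p..<a+int n*p+p})"
    using card_split[of a "a+int n*p" "a+int n*p+p"] p by (simp add: algebra_simps)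
  also have "\<dots> = n * card B + card B" using Suc per_window[OF p B, of "a+int n*p"] by simp
  finally show ?case by simp
qed

lemma per_lower:
  fixes p :: int
  assumes p: "p > 0" and B: "B \<subseteq> {0..<p}"
  shows "real (card ({x. x mod p \<in> B} \<inter> {-int N..int N})) \<ge> (real (card B) / real_of_int p) * (2*N+1) - card B"
proof -
  let ?A = "{x. x mod p \<in> B}"
  define q where "q = nat ((2 * int N + 1) div p)"
  have d: "int q = (2 * int N + 1) div p" unfolding q_def using p by (simp add: pos_imp_zdiv_nonneg_iff)
  have qp: "int q * p \<le> 2 * int N + 1" unfolding d
  proof -
    have "(2 * int N + 1) div p * p + (2 * int N + 1) mod p = 2 * int N + 1" by (rule div_mult_mod_eq)
    moreover have "(2 * int N + 1) mod p \<ge> 0" using p by simp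
    ultimately show "(2 * int N + 1) div p * p \<le> 2 * int N + 1" by linarith
  qed
  have qp2: "2 * int N + 1 < (int q + 1) * p" unfolding d using p
  proof -
    have "(2 * int N + 1) div p * p + (2 * int N + 1) mod p = 2 * int N + 1" by (rule div_mult_mod_eq)
    moreover have "(2 * int N + 1) mod p < p" using p by simp
    ultimately have "2 * int N + 1 < (2 * int N + 1) div p * p + p" by linarith
    then show "2 * int N + 1 < ((2 * int N + 1) div p + 1) * p" by (simp add: distrib_right)
  qed
  have sub: "?A \<inter> {-int N..<-int N + int q * p} \<subseteq> ?A \<inter> {-int N..int N}" using qp by auto
  have "q * card B \<le> card (?A \<inter> {-int N..int N})"
    using card_mono[OF _ sub] per_windows[OF p B, of "-int N" q] by simp
  then have c1: "real q * card B \<le> card (?A \<inter> {-int N..int N})" by (metis of_nat_mono of_nat_mult)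
  have "real_of_int (2 * int N + 1) < real_of_int ((int q + 1) * p)" using qp2 by (simp only: of_int_less_iff)
  then have "real (2*N+1) < (real q + 1) * real_of_int p" by simp
  then have "(2*N+1) / real_of_int p < real q + 1" using p by (simp add: divide_less_eq)
  then have "(real (card B) / real_of_int p) * (2*N+1) \<le> (real q + 1) * card B"
  proof -
    assume h: "(2*N+1) / real_of_int p < real q + 1"
    have "(real (card B) / real_of_int p) * (2*N+1) = real (card B) * ((2*N+1) / real_of_int p)" by simp
    also have "\<dots> \<le> real (card B) * (real q + 1)" using h by (intro mult_left_mono) auto
    finally show ?thesis by (simp add: mult.commute)
  qed
  moreover have "(real q + 1) * real (card B) = real q * card B + card B" by (simp add: distrib_right)
  ultimately show ?thesis using c1 by linarith
qed



definition B0 :: "nat \<Rightarrow> int set" where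
  "B0 m = {r. 0 \<le> r \<and> r \<le> 5*int m - 2 \<and> (r mod 5 = 0 \<or> r mod 5 = 3)}"

lemma mod2p: "0 \<le> s \<Longrightarrow> s < 2*p \<Longrightarrow> (s::int) mod p = (if s < p then s else s - p)"
proof -
  assume "0 \<le> s" "s < 2*p"
  show ?thesis
  proof (cases "s < p")
    case True then show ?thesis using \<open>0\<le>s\<close> by simp
  next
    case False
    then have "s mod p = (s - p) mod p" by simp
    also have "\<dots> = s - p" using False \<open>s < 2*p\<close> by (intro mod_pos_pos_trivial) auto
    finally show ?thesis using False by simp
  qed
qed

lemma card_B0: "card (B0 m) = 2*m"
proof (induction m)
  case 0
  have "B0 0 = {}" unfolding B0_def by auto
  then show ?case by simp
next
  case (Suc m)
  have e: "B0 (Suc m) = insert (5*int m) (insert (5*int m+3) (B0 m))"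
    unfolding B0_def by auto presburger+
  have "5*int m \<notin> B0 m" "5*int m+3 \<notin> B0 m" unfolding B0_def by auto
  moreover have "finite (B0 m)" unfolding B0_def by (rule finite_subset[of _ "{0..5*int m}"]) auto
  ultimately show ?case unfolding e using Suc by simp
qed

lemma res0:
  assumes "r \<in> B0 m" "d \<in> {1,4,5*int m}" "m \<ge> 1"
  shows "(r + d) mod (5*int m+1) \<notin> B0 m"
proof -
  have "0 \<le> r + d" "r + d < 2*(5*int m+1)" using assms unfolding B0_def by auto
  note e = mod2p[OF this]
  show ?thesis unfolding e using assms unfolding B0_def by auto presburger+
qed

lemma res2:
  assumes "r \<in> insert (5*int m) (B0 m)" "d \<in> {1,4,5*int m+2}" "m \<ge> 1"
  shows "(r + d) mod (5*int m+3) \<notin> insert (5*int m) (B0 m)"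
proof -
  have "0 \<le> r + d" "r + d < 2*(5*int m+3)" using assms unfolding B0_def by auto
  note e = mod2p[OF this]
  show ?thesis unfolding e using assms unfolding B0_def by auto presburger+
qed

lemma res3:
  assumes "r \<in> insert (5*int m+1) (B0 m)" "d \<in> {1,4,5*int m+3}" "m \<ge> 1"
  shows "(r + d) mod (5*int m+4) \<notin> insert (5*int m+1) (B0 m)"
proof -
  have "0 \<le> r + d" "r + d < 2*(5*int m+4)" using assms unfolding B0_def by auto
  note e = mod2p[OF this]
  show ?thesis unfolding e using assms unfolding B0_def by auto presburger+
qed



lemma indep_D:
  assumes "independent_set {1,4,k} A" "x \<in> A"
  shows "x+1 \<notin> A" "x+4 \<notin> A" "x + int k \<notin> A"
proof -
  have h: "\<not> dist_adj {1,4,k} i j" if "i \<in> A" "j \<in> A" for i j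
    using assms(1) that unfolding independent_set_def by blast
  show "x+1 \<notin> A" using h[of "x+1" x] assms(2) unfolding dist_adj_def by auto
  show "x+4 \<notin> A" using h[of "x+4" x] assms(2) unfolding dist_adj_def by auto
  show "x+int k \<notin> A" using h[of "x+int k" x] assms(2) unfolding dist_adj_def by auto
qed

lemma indep_good: "independent_set {1,4,k} A \<Longrightarrow> good14 A"
  unfolding good14_def using indep_D by blast

lemma indep_I:
  assumes "\<And>x d. x \<in> A \<Longrightarrow> d \<in> {1,4,int k} \<Longrightarrow> x + d \<notin> A"
  shows "independent_set {1,4,k} A"
  unfolding independent_set_def dist_adj_def
proof (intro ballI notI)
  fix i j assume ij: "i \<in> A" "j \<in> A" "nat \<bar>i - j\<bar> \<in> {1,4,k}"
  then have d: "\<bar>i - j\<bar> \<in> {1,4,int k}" by auto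
  show False
  proof (cases "i \<ge> j")
    case True
    then have "i = j + \<bar>i - j\<bar>" by simp
    then show False using assms[OF ij(2) d] ij(1) by simp
  next
    case False
    then have "j = i + \<bar>i - j\<bar>" by simp
    then show False using assms[OF ij(1) d] ij(2) by simp
  qed
qed

lemma ud_chunks:
  fixes \<rho> :: real and T :: nat and A :: "int set"
  assumes ch: "\<And>a. a\<in>A \<Longrightarrow> \<exists>L t. L > 0 \<and> real t \<le> \<rho> * real L \<and> t \<le> T \<and> card (A \<inter> {a..<a+int L}) \<le> t"
    and rho: "\<rho> \<ge> 0"
  shows "upper_density A \<le> ereal \<rho>"
proof (rule ud_upper[where C = "real T"])
  fix N
  have "{-int N..int N} = {-int N..<-int N + int (2*N+1)}" by auto
  then show "real (card (A \<inter> {-int N..int N})) \<le> \<rho> * (2*N+1) + real T"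
    using count_bound[OF ch rho, of "-int N" "2*N+1"] by simp
qed

lemma ud_periodic:
  fixes p :: int
  assumes "p > 0" "B \<subseteq> {0..<p}"
  shows "upper_density {x. x mod p \<in> B} \<ge> ereal (real (card B) / real_of_int p)"
  by (rule ud_lower[where C = "real (card B)"]) (use per_lower[OF assms] in simp)

lemma periodic_indep:
  fixes p :: int
  assumes "p > 0" "\<And>r d. r \<in> B \<Longrightarrow> d \<in> {1,4,int k} \<Longrightarrow> (r + d) mod p \<notin> B"
  shows "independent_set {1,4,k} {x. x mod p \<in> B}"
proof (rule indep_I)
  fix x d assume "x \<in> {x. x mod p \<in> B}" "d \<in> {1,4,int k}"
  then have "(x mod p + d) mod p \<notin> B" using assms(2) by auto
  then show "x + d \<notin> {x. x mod p \<in> B}" by (simp add: mod_add_left_eq)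
qed

lemma rho_le: "real t * real p \<le> real c * real L \<Longrightarrow> p > 0 \<Longrightarrow> real t \<le> real c / real p * real L"
  by (simp add: field_simps)



lemma up_general:
  assumes "independent_set {1,4,k} A"
  shows "upper_density A \<le> ereal (2/5)"
proof (rule ud_chunks[where T = 2])
  fix a assume "a \<in> A"
  have "card (A \<inter> {a..<a+int 5}) \<le> 2" using blk5[OF indep_good[OF assms]] by simp
  then show "\<exists>L t. L > 0 \<and> real t \<le> 2/5 * real L \<and> t \<le> 2 \<and> card (A \<inter> {a..<a+int L}) \<le> t"
    by (intro exI[of _ 5] exI[of _ 2]) simp
qed simp

lemma up_0:
  assumes "independent_set {1,4,k} A" "k = 5*m" "m \<ge> 1"
  shows "upper_density A \<le> ereal (real (2*m) / real (k+1))"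
proof (rule ud_chunks[where T = "2*m"])
  fix a assume "a \<in> A"
  have g: "good14 A" by (rule indep_good[OF assms(1)])
  have c: "card (A \<inter> {a..<a+5*int m+1}) \<le> 2*m"
  proof -
    have "\<not> (a \<in> A \<and> a + 5*int m \<in> A)" using indep_D(3)[OF assms(1)] assms(2) by auto
    then show ?thesis using L0[OF g, of a m] by linarith
  qed
  have e: "a + int (k+1) = a+5*int m+1" using assms(2) by simp
  show "\<exists>L t. L > 0 \<and> real t \<le> real (2*m) / real (k+1) * real L \<and> t \<le> 2*m \<and> card (A \<inter> {a..<a+int L}) \<le> t"
  proof -
    have c': "card (A \<inter> {a..<a + int (k+1)}) \<le> 2*m" unfolding e by (rule c)
    show ?thesis by (rule exI[of _ "k+1"], rule exI[of _ "2*m"]) (use c' in simp)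
  qed
qed simp

lemma up_2:
  assumes "independent_set {1,4,k} A" "k = 5*m+2" "m \<ge> 1"
  shows "upper_density A \<le> ereal (real (2*m+1) / real (k+1))"
proof (rule ud_chunks[where T = "2*m+1"])
  fix a assume "a \<in> A"
  have g: "good14 A" by (rule indep_good[OF assms(1)])
  let ?b = "a+5*int m+1"
  have sp: "card (A \<inter> {a..<?b+2}) = card (A \<inter> {a..<?b}) + card (A \<inter> {?b..<?b+2})"
    by (rule card_split) auto
  have c2: "card (A \<inter> {?b..<?b+2}) = cA A ?b + cA A (?b+1)" by (rule cnt2)
  have c: "card (A \<inter> {a..<?b+2}) \<le> 2*m+1"
  proof (rule ccontr)
    assume "\<not> ?thesis"
    then have "card (A \<inter> {a..<?b}) = 2*m+1" "cA A ?b + cA A (?b+1) = 1"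
      using sp c2 L0[OF g, of a m] g1[OF g, of ?b] by auto
    then have "a \<in> A" "a + 5*int m \<in> A" using L0[OF g, of a m] by auto
    have "cA A ?b = 0" using indep_D(1)[OF assms(1) \<open>a + 5*int m \<in> A\<close>] by (simp add: cA_def)
    moreover have "cA A (?b+1) = 0" using indep_D(3)[OF assms(1) \<open>a \<in> A\<close>] assms(2) by (simp add: cA_def algebra_simps)
    ultimately show False using \<open>cA A ?b + cA A (?b+1) = 1\<close> by simp
  qed
  have e: "a + int (k+1) = ?b+2" using assms(2) by simp
  show "\<exists>L t. L > 0 \<and> real t \<le> real (2*m+1) / real (k+1) * real L \<and> t \<le> 2*m+1 \<and> card (A \<inter> {a..<a+int L}) \<le> t"
  proof -
    have c': "card (A \<inter> {a..<a + int (k+1)}) \<le> 2*m+1" unfolding e by (rule c)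
    show ?thesis by (rule exI[of _ "k+1"], rule exI[of _ "2*m+1"]) (use c' in simp)
  qed
qed simp

lemma up_3:
  assumes "independent_set {1,4,k} A" "k = 5*m+3" "m \<ge> 1"
  shows "upper_density A \<le> ereal (real (2*m+1) / real (k+1))"
proof (rule ud_chunks[where T = "2*m+2"])
  fix a assume aA: "a \<in> A"
  have g: "good14 A" by (rule indep_good[OF assms(1)])
  let ?b = "a+5*int m+1"
  let ?c = "card (A \<inter> {a..<?b+3})"
  have sp: "?c = card (A \<inter> {a..<?b}) + card (A \<inter> {?b..<?b+3})"
    by (rule card_split) auto
  have c3: "card (A \<inter> {?b..<?b+3}) = cA A ?b + cA A (?b+1) + cA A (?b+2)" by (rule cnt3)
  have ak: "cA A (?b+2) = 0" using indep_D(3)[OF assms(1) aA] assms(2) by (simp add: cA_def algebra_simps)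
  have l0: "card (A \<inter> {a..<?b}) \<le> 2*m+1" using L0[OF g, of a m] by simp
  have cle: "?c \<le> 2*m+2" using sp c3 ak l0 g1[OF g, of ?b] by linarith
  have rL: "real (2*m+1) / real (k+1) * real (k+1) = real (2*m+1)" by simp
  show "\<exists>L t. L > 0 \<and> real t \<le> real (2*m+1) / real (k+1) * real L \<and> t \<le> 2*m+2 \<and> card (A \<inter> {a..<a+int L}) \<le> t"
  proof (cases "?c \<le> 2*m+1")
    case True
    have e: "a + int (k+1) = ?b+3" using assms(2) by simp
    have c': "card (A \<inter> {a..<a + int (k+1)}) \<le> 2*m+1" unfolding e by (rule True)
    show ?thesis by (rule exI[of _ "k+1"], rule exI[of _ "2*m+1"]) (use c' in simp)
  next
    case False
    then have h: "card (A \<inter> {a..<?b}) = 2*m+1" "cA A ?b + cA A (?b+1) = 1"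
      using sp c3 ak l0 g1[OF g, of ?b] by auto
    then have "a + 5*int m \<in> A" using L0[OF g, of a m] by auto
    then have "cA A ?b = 0" using indep_D(1)[OF assms(1)] by (simp add: cA_def)
    then have b1: "?b + 1 \<in> A" using h(2) by (simp add: cA_def split: if_splits)
    have a2: "a + 2 \<in> A"
    proof (rule ccontr)
      assume n2: "a + 2 \<notin> A"
      have s1: "?c = card (A \<inter> {a..<a+3}) + card (A \<inter> {a+3..<?b+3})"
        by (rule card_split) auto
      have s2: "card (A \<inter> {a+3..<?b+3}) = card (A \<inter> {a+3..<a+3+5*int m}) + card (A \<inter> {a+3+5*int m..<?b+3})"
        by (rule card_split) auto
      have s3: "card (A \<inter> {a+3+5*int m..<?b+3}) = cA A (a+3+5*int m)"
        using cnt1[of A "a+3+5*int m"] by (simp add: algebra_simps)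
      have "cA A (a+3+5*int m) = 0" using ak by (simp add: algebra_simps)
      moreover have "card (A \<inter> {a..<a+3}) \<le> 1"
        using cnt3[of A a] n2 indep_D(1)[OF assms(1) aA] by (simp add: cA_def)
      moreover have "card (A \<inter> {a+3..<a+3+5*int m}) \<le> 2*m" by (rule blk5j[OF g])
      ultimately show False using False s1 s2 s3 by linarith
    qed
    have "card (A \<inter> {a..<?b+6}) = ?c + card (A \<inter> {?b+3..<?b+3+3})"
      using card_split[of a "?b+3" "?b+6" A] by simp
    also have "card (A \<inter> {?b+3..<?b+3+3}) = 0"
    proof -
      have "cA A (?b+3) = 0" using indep_D(2)[OF assms(1) \<open>a + 5*int m \<in> A\<close>] by (simp add: cA_def algebra_simps)
      moreover have "cA A (?b+3+1) = 0" using indep_D(3)[OF assms(1) a2] assms(2) by (simp add: cA_def algebra_simps)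
      moreover have "cA A (?b+3+2) = 0" using indep_D(2)[OF assms(1) b1] by (simp add: cA_def algebra_simps)
      ultimately show ?thesis using cnt3[of A "?b+3"] by simp
    qed
    finally have c6: "card (A \<inter> {a..<a+int (5*m+7)}) \<le> 2*m+2" using cle by (simp add: algebra_simps)
    have ineq: "real (2*m+2) * real (k+1) \<le> real (2*m+1) * real (5*m+7)"
    proof -
      have "(2*m+2) * (k+1) \<le> (2*m+1) * (5*m+7)" using assms(2,3) by (simp add: algebra_simps)
      then show ?thesis by (metis of_nat_mult of_nat_le_iff)
    qed
    show ?thesis
      by (rule exI[of _ "5*m+7"], rule exI[of _ "2*m+2"]) (use c6 rho_le[OF ineq] in simp)
  qed
qed simp



lemma ratio_eq:
  assumes "\<And>A. independent_set S A \<Longrightarrow> upper_density A \<le> ereal v"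
    "independent_set S A0" "upper_density A0 \<ge> ereal v"
  shows "indep_ratio S = ereal v"
  unfolding indep_ratio_def
proof (rule antisym)
  show "(SUP A\<in>{A. independent_set S A}. upper_density A) \<le> ereal v"
    by (rule SUP_least) (use assms(1) in auto)
  show "ereal v \<le> (SUP A\<in>{A. independent_set S A}. upper_density A)"
    by (rule SUP_upper2[of A0]) (use assms(2,3) in auto)
qed

lemma B0_sub: "B0 m \<subseteq> {0..<5*int m}" unfolding B0_def by auto

lemma theorem32:
  fixes k :: nat
  assumes "k > 4"
  shows "indep_ratio {1, 4, k} =
    ereal (if k mod 5 = 0 then 2 * real k / (5 * real k + 5)
           else if k mod 5 = 1 then 2 / 5
           else if k mod 5 = 2 then (2 * real k + 1) / (5 * real k + 5)
           else if k mod 5 = 3 then (2 * real k - 1) / (5 * real k + 5)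
           else 2 / 5)"
proof -
  define m where "m = k div 5"
  have km: "k = 5*m + k mod 5" unfolding m_def by simp
  have m1: "m \<ge> 1" using assms unfolding m_def by simp
  have km': "int k = 5 * int m + int (k mod 5)" using km by (metis of_nat_add of_nat_mult of_nat_numeral)
  consider "k mod 5 = 0" | "k mod 5 = 1" | "k mod 5 = 2" | "k mod 5 = 3" | "k mod 5 = 4" by linarith
  then show ?thesis
  proof cases
    case 1
    have k: "k = 5*m" using km 1 by simp
    have v: "2 * real k / (5 * real k + 5) = real (2*m) / real (k+1)" unfolding k by (simp add: field_simps)
    have v2: "real (card (B0 m)) / real_of_int (5*int m+1) = real (2*m) / real (k+1)"
      unfolding card_B0 k by simp
    have "indep_ratio {1,4,k} = ereal (real (2*m) / real (k+1))"
    proof (rule ratio_eq)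
      show "upper_density A \<le> ereal (real (2*m) / real (k+1))" if "independent_set {1,4,k} A" for A
        by (rule up_0[OF that k m1])
      show "independent_set {1,4,k} {x. x mod (5*int m+1) \<in> B0 m}"
      proof (rule periodic_indep)
        fix r d assume r: "r \<in> B0 m" and d: "d \<in> {1,4,int k}"
        have kd: "d \<in> {1,4,5*int m}" using d k by (simp add: add.commute)
        show "(r + d) mod (5*int m+1) \<notin> B0 m" using res0[OF r kd m1] .
      qed simp
      show "upper_density {x. x mod (5*int m+1) \<in> B0 m} \<ge> ereal (real (2*m) / real (k+1))"
      proof -
        have "B0 m \<subseteq> {0..<5*int m+1}" using B0_sub[of m] by auto
        then show ?thesis using ud_periodic[of "5*int m+1" "B0 m"] v2 by simp
      qed
    qed
    then show ?thesis using 1 v by simp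
  next
    case 3
    have k: "k = 5*m+2" using km 3 by simp
    have v: "(2 * real k + 1) / (5 * real k + 5) = real (2*m+1) / real (k+1)" unfolding k by (simp add: field_simps)
    have cB: "card (insert (5*int m) (B0 m)) = 2*m+1"
    proof -
      have "5*int m \<notin> B0 m" unfolding B0_def by auto
      moreover have "finite (B0 m)" using B0_sub[of m] by (meson finite_atLeastLessThan_int finite_subset)
      ultimately show ?thesis by (simp add: card_B0)
    qed
    have v2: "real (card (insert (5*int m) (B0 m))) / real_of_int (5*int m+3) = real (2*m+1) / real (k+1)"
      unfolding cB k by simp
    have "indep_ratio {1,4,k} = ereal (real (2*m+1) / real (k+1))"
    proof (rule ratio_eq)
      show "upper_density A \<le> ereal (real (2*m+1) / real (k+1))" if "independent_set {1,4,k} A" for A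
        by (rule up_2[OF that k m1])
      show "independent_set {1,4,k} {x. x mod (5*int m+3) \<in> insert (5*int m) (B0 m)}"
      proof (rule periodic_indep)
        fix r d assume r: "r \<in> insert (5*int m) (B0 m)" and d: "d \<in> {1,4,int k}"
        have kd: "d \<in> {1,4,5*int m+2}" using d k by (simp add: add.commute)
        show "(r + d) mod (5*int m+3) \<notin> insert (5*int m) (B0 m)" using res2[OF r kd m1] .
      qed simp
      show "upper_density {x. x mod (5*int m+3) \<in> insert (5*int m) (B0 m)} \<ge> ereal (real (2*m+1) / real (k+1))"
      proof -
        have "insert (5*int m) (B0 m) \<subseteq> {0..<5*int m+3}" using B0_sub[of m] by auto
        then show ?thesis using ud_periodic[of "5*int m+3" "insert (5*int m) (B0 m)"] v2 by simp
      qed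
    qed
    then show ?thesis using 3 v by simp
  next
    case 4
    have k: "k = 5*m+3" using km 4 by simp
    have v: "(2 * real k - 1) / (5 * real k + 5) = real (2*m+1) / real (k+1)" unfolding k by (simp add: field_simps)
    have cB: "card (insert (5*int m+1) (B0 m)) = 2*m+1"
    proof -
      have "5*int m+1 \<notin> B0 m" unfolding B0_def by auto
      moreover have "finite (B0 m)" using B0_sub[of m] by (meson finite_atLeastLessThan_int finite_subset)
      ultimately show ?thesis by (simp add: card_B0)
    qed
    have v2: "real (card (insert (5*int m+1) (B0 m))) / real_of_int (5*int m+4) = real (2*m+1) / real (k+1)"
      unfolding cB k by simp
    have "indep_ratio {1,4,k} = ereal (real (2*m+1) / real (k+1))"
    proof (rule ratio_eq)
      show "upper_density A \<le> ereal (real (2*m+1) / real (k+1))" if "independent_set {1,4,k} A" for A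
        by (rule up_3[OF that k m1])
      show "independent_set {1,4,k} {x. x mod (5*int m+4) \<in> insert (5*int m+1) (B0 m)}"
      proof (rule periodic_indep)
        fix r d assume r: "r \<in> insert (5*int m+1) (B0 m)" and d: "d \<in> {1,4,int k}"
        have kd: "d \<in> {1,4,5*int m+3}" using d k by (simp add: add.commute)
        show "(r + d) mod (5*int m+4) \<notin> insert (5*int m+1) (B0 m)" using res3[OF r kd m1] .
      qed simp
      show "upper_density {x. x mod (5*int m+4) \<in> insert (5*int m+1) (B0 m)} \<ge> ereal (real (2*m+1) / real (k+1))"
      proof -
        have "insert (5*int m+1) (B0 m) \<subseteq> {0..<5*int m+4}" using B0_sub[of m] by auto
        then show ?thesis using ud_periodic[of "5*int m+4" "insert (5*int m+1) (B0 m)"] v2 by simp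
      qed
    qed
    then show ?thesis using 4 v by simp
  next
    case 2
    have r: "int k mod 5 = 1 \<or> int k mod 5 = 4" using 2 km' by presburger
    have "indep_ratio {1,4,k} = ereal (2/5)"
    proof (rule ratio_eq)
      show "upper_density A \<le> ereal (2/5)" if "independent_set {1,4,k} A" for A
        by (rule up_general[OF that])
      show "independent_set {1,4,k} {x. x mod 5 \<in> {0,2}}"
      proof (rule periodic_indep)
        fix r' d assume r': "r' \<in> {0,2::int}" and d: "d \<in> {1,4,int k}"
        have rr: "r' = 0 \<or> r' = 2" using r' by simp
        have dd: "d = 1 \<or> d = 4 \<or> d = int k" using d by simp
        have e: "(r' + d) mod 5 = (r' + d mod 5) mod 5" by (simp add: mod_add_right_eq)
        have "d mod 5 = 1 \<or> d mod 5 = 4" using dd r by auto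
        then show "(r' + d) mod 5 \<notin> {0,2}" unfolding e using rr by auto
      qed simp
      show "upper_density {x. x mod 5 \<in> {0,2::int}} \<ge> ereal (2/5)"
        using ud_periodic[of 5 "{0,2::int}"] by simp
    qed
    then show ?thesis using 2 by simp
  next
    case 5
    have r: "int k mod 5 = 1 \<or> int k mod 5 = 4" using 5 km' by presburger
    have "indep_ratio {1,4,k} = ereal (2/5)"
    proof (rule ratio_eq)
      show "upper_density A \<le> ereal (2/5)" if "independent_set {1,4,k} A" for A
        by (rule up_general[OF that])
      show "independent_set {1,4,k} {x. x mod 5 \<in> {0,2}}"
      proof (rule periodic_indep)
        fix r' d assume r': "r' \<in> {0,2::int}" and d: "d \<in> {1,4,int k}"
        have rr: "r' = 0 \<or> r' = 2" using r' by simp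
        have dd: "d = 1 \<or> d = 4 \<or> d = int k" using d by simp
        have e: "(r' + d) mod 5 = (r' + d mod 5) mod 5" by (simp add: mod_add_right_eq)
        have "d mod 5 = 1 \<or> d mod 5 = 4" using dd r by auto
        then show "(r' + d) mod 5 \<notin> {0,2}" unfolding e using rr by auto
      qed simp
      show "upper_density {x. x mod 5 \<in> {0,2::int}} \<ge> ereal (2/5)"
        using ud_periodic[of 5 "{0,2::int}"] by simp
    qed
    then show ?thesis using 5 by simp
  qed
qed

end
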